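(* Let $\gamma\in[0,1)$ and $\Omega_{\gamma}=\{z\in\mathbb{C}:|z+\frac{\gamma}{1-\gamma}|<\frac{1}{1-\gamma}\}$. Let $f=h+\overline{g}$ be a harmonic mapping in $\Omega_\gamma$ with $h,g$ analytic in $\Omega_\gamma$, $|h(z)|\le 1$ on $\Omega_\gamma$, $h(z)=\sum_{n=0}^\infty a_n\left(z+\frac{\gamma}{1-\gamma}\right)^n$ and $g(z)=\sum_{n=1}^\infty b_n\left(z+\frac{\gamma}{1-\gamma}\right)^n$ in $\Omega_\gamma$, and $|g'(z)|\le k|h'(z)|$ in $\Omega_\gamma$ for some $k\in[0,1)$. Then $$\sum_{n=0}^\infty \frac{|a_n|}{(1-\gamma)^n}\rho^n+\sum_{n=1}^\infty\frac{|b_n|}{(1-\gamma)^n}\rho^n\le 1$$ for $|(1-\gamma)z+\gamma|=\rho\le\rho_0=1/(2k+3)$. The number $\rho_0$ is best possible.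
   Context: $\Omega_\gamma$ is the open disk centered at $-\gamma/(1-\gamma)$ of radius $1/(1-\gamma)$. *)

theory Defs
  imports "HOL-Analysis.Analysis"
begin

definition omega_center :: "real \<Rightarrow> complex" where
  "omega_center \<gamma> = complex_of_real (- \<gamma> / (1 - \<gamma>))"

definition Omega :: "real \<Rightarrow> complex set" where
  "Omega \<gamma> = ball (omega_center \<gamma>) (1 / (1 - \<gamma>))"

text \<open>Hypotheses of the theorem on the pair (h, g) with coefficient sequences a, b
  (b is indexed so that b n is the coefficient of (z - c)^n, only n >= 1 used).\<close>
definition harm_hyp ::
  "real \<Rightarrow> real \<Rightarrow> (complex \<Rightarrow> complex) \<Rightarrow> (complex \<Rightarrow> complex)
     \<Rightarrow> (nat \<Rightarrow> complex) \<Rightarrow> (nat \<Rightarrow> complex) \<Rightarrow> bool" where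
  "harm_hyp \<gamma> k h g a b \<longleftrightarrow>
     h holomorphic_on Omega \<gamma> \<and> g holomorphic_on Omega \<gamma> \<and>
     (\<forall>z\<in>Omega \<gamma>. norm (h z) \<le> 1) \<and>
     (\<forall>z\<in>Omega \<gamma>. (\<lambda>n. a n * (z - omega_center \<gamma>) ^ n) sums h z) \<and>
     (\<forall>z\<in>Omega \<gamma>. (\<lambda>n. b (Suc n) * (z - omega_center \<gamma>) ^ Suc n) sums g z) \<and>
     (\<forall>z\<in>Omega \<gamma>. norm (deriv g z) \<le> k * norm (deriv h z))"

definition bohr_ineq :: "real \<Rightarrow> (nat \<Rightarrow> complex) \<Rightarrow> (nat \<Rightarrow> complex) \<Rightarrow> real \<Rightarrow> bool" where
  "bohr_ineq \<gamma> a b \<rho> \<longleftrightarrow>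
     summable (\<lambda>n. norm (a n) / (1 - \<gamma>) ^ n * \<rho> ^ n) \<and>
     summable (\<lambda>n. norm (b (Suc n)) / (1 - \<gamma>) ^ Suc n * \<rho> ^ Suc n) \<and>
     (\<Sum>n. norm (a n) / (1 - \<gamma>) ^ n * \<rho> ^ n)
       + (\<Sum>n. norm (b (Suc n)) / (1 - \<gamma>) ^ Suc n * \<rho> ^ Suc n) \<le> 1"

end

theory Submission imports Defs "HOL-Complex_Analysis.Complex_Analysis" begin

lemma limit_t_arg:
  fixes x y :: real
  assumes "x \<ge> 0" "y \<ge> 0" and H: "\<And>t. 0 < t \<Longrightarrow> t < 1 \<Longrightarrow> t * x \<le> 1 - t^2 * y"
  shows "x \<le> 1 - y"
proof (rule ccontr)
  assume "\<not> x \<le> 1 - y"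
  hence xy: "x + y > 1" by simp
  define s where "s = (1 + 1/(x+y))/2"
  have aux: "2*(x+y) < (x+y+1)*(x+y)" using xy by (intro mult_strict_right_mono) auto
  have s1: "s < 1" "1/(x+y) < s" using xy aux by (auto simp: s_def divide_simps)
  have "0 < 1/(x+y)" using xy by simp
  hence "0 < 1 + 1/(x+y)" by linarith
  hence s0: "0 < s" by (simp add: s_def)
  define t where "t = sqrt s"
  have t: "0 < t" "t < 1" "t^2 = s" using s0 s1 by (auto simp: t_def)
  have "t*t \<le> t*1" using t by (intro mult_left_mono) auto
  hence "t^2 * x \<le> t * x" using assms(1) by (simp add: power2_eq_square mult_right_mono)
  hence "t^2 * (x+y) \<le> 1" using H[OF t(1,2)] by (simp add: algebra_simps)
  moreover have "1 < s * (x+y)" using s1 xy by (simp add: field_simps)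
  ultimately show False using t(3) by simp
qed

lemma schwarz_pick0:
  assumes hol: "\<phi> holomorphic_on ball 0 1" and bd: "\<forall>z\<in>ball 0 1. norm (\<phi> z) \<le> 1"
  shows "norm (deriv \<phi> 0) \<le> 1 - norm (\<phi> 0)^2"
proof -
  have key: "t * norm (deriv \<phi> 0) \<le> 1 - t^2 * norm (\<phi> 0)^2" if t: "0 < t" "t < 1" for t
  proof -
    define \<alpha> where "\<alpha> = of_real t * \<phi> 0"
    have tl: "norm (of_real t * \<phi> z) < 1" if "z \<in> ball 0 1" for z
    proof -
      have "norm (of_real t * \<phi> z) = t * norm (\<phi> z)" using t by (simp add: norm_mult)
      also have "\<dots> \<le> t" using bd that t by (simp add: mult_left_le)
      finally show ?thesis using t by simp
    qed
    have \<alpha>1: "norm \<alpha> < 1" unfolding \<alpha>_def by (rule tl) simp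
    define \<psi> where "\<psi> = (\<lambda>z. Moebius_function 0 \<alpha> (of_real t * \<phi> z))"
    have hol\<psi>: "\<psi> holomorphic_on ball 0 1"
      unfolding \<psi>_def
      apply (rule holomorphic_on_compose_gen[where g="Moebius_function 0 \<alpha>" and t="ball 0 1", unfolded o_def])
      using hol tl \<alpha>1 by (auto intro!: holomorphic_intros Moebius_function_holomorphic)
    have \<psi>0: "\<psi> 0 = 0" by (simp add: \<psi>_def \<alpha>_def Moebius_function_eq_zero)
    have \<psi>lt: "norm (\<psi> z) < 1" if "norm z < 1" for z
      unfolding \<psi>_def using tl[of z] that \<alpha>1 by (intro Moebius_function_norm_lt_1) auto
    have sch: "norm (deriv \<psi> 0) \<le> 1"
      using Schwarz_Lemma(2)[OF hol\<psi> \<psi>0 \<psi>lt, of 0] by simp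
    have d\<phi>: "(\<phi> has_field_derivative deriv \<phi> 0) (at 0)"
      using hol by (meson DERIV_deriv_iff_field_differentiable centre_in_ball holomorphic_on_imp_differentiable_at open_ball zero_less_one)
    have nz: "1 - cnj \<alpha> * \<alpha> \<noteq> 0"
    proof -
      have "cnj \<alpha> * \<alpha> = of_real (norm \<alpha> ^ 2)" by (metis complex_norm_square mult.commute of_real_power)
      moreover have "norm \<alpha> ^ 2 < 1" using \<alpha>1 by (simp add: power_less_one_iff)
      ultimately show ?thesis by (metis less_irrefl of_real_1 of_real_eq_iff right_minus_eq)
    qed
    have "((\<lambda>z. (of_real t * \<phi> z - \<alpha>) / (1 - cnj \<alpha> * (of_real t * \<phi> z))) has_field_derivative
           ((of_real t * deriv \<phi> 0) * (1 - cnj \<alpha> * (of_real t * \<phi> 0)) - (of_real t * \<phi> 0 - \<alpha>) * (- (cnj \<alpha> * (of_real t * deriv \<phi> 0))))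
            / (1 - cnj \<alpha> * (of_real t * \<phi> 0))^2) (at 0)"
      using nz \<alpha>_def
      by (auto intro!: derivative_eq_intros d\<phi> simp: power2_eq_square)
    also have "((of_real t * deriv \<phi> 0) * (1 - cnj \<alpha> * (of_real t * \<phi> 0)) - (of_real t * \<phi> 0 - \<alpha>) * (- (cnj \<alpha> * (of_real t * deriv \<phi> 0))))
            / (1 - cnj \<alpha> * (of_real t * \<phi> 0))^2 = of_real t * deriv \<phi> 0 / (1 - cnj \<alpha> * \<alpha>)"
    proof -
      have e: "of_real t * \<phi> 0 = \<alpha>" by (simp add: \<alpha>_def)
      show ?thesis unfolding e using nz by (simp add: power2_eq_square)
    qed
    finally have dpsi: "deriv \<psi> 0 = of_real t * deriv \<phi> 0 / (1 - cnj \<alpha> * \<alpha>)"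
      unfolding \<psi>_def Moebius_function_simple by (rule DERIV_imp_deriv)
    have ca: "cnj \<alpha> * \<alpha> = of_real (t^2 * norm (\<phi> 0) ^ 2)"
    proof -
      have "cnj \<alpha> * \<alpha> = of_real (norm \<alpha> ^ 2)" by (metis complex_norm_square mult.commute)
      thus ?thesis using t by (simp add: \<alpha>_def norm_mult power_mult_distrib)
    qed
    have lt1: "t^2 * norm (\<phi> 0) ^ 2 < 1"
    proof -
      have tn: "t * norm (\<phi> 0) < 1" using \<alpha>1 t by (simp add: \<alpha>_def norm_mult)
      have "(t * norm (\<phi> 0))^2 < 1" using tn t by (simp add: power_less_one_iff)
      thus ?thesis by (simp add: power_mult_distrib)
    qed
    have D: "1 - cnj \<alpha> * \<alpha> = of_real (1 - t^2 * norm (\<phi> 0) ^ 2)" unfolding ca by simp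
    have "norm (deriv \<psi> 0) = t * norm (deriv \<phi> 0) / (1 - t^2 * norm (\<phi> 0) ^ 2)"
      unfolding dpsi D norm_divide norm_mult norm_of_real using t lt1 by simp
    with sch show ?thesis using \<open>t^2 * norm (\<phi> 0) ^ 2 < 1\<close> by (simp add: divide_le_eq_1 split: if_splits)
  qed
  show ?thesis by (rule limit_t_arg) (use key in auto)
qed

lemma root_unity_sum:
  assumes n: "n \<ge> 1"
  defines "\<epsilon> \<equiv> exp (2 * of_real pi * \<i> * of_nat 1 / of_nat n) :: complex"
  shows "(\<Sum>j<n. (\<epsilon>^j)^m) = (if n dvd m then of_nat n else 0)"
proof -
  have em: "\<epsilon>^m = exp (2 * of_real pi * \<i> * of_nat m / of_nat n)"
    unfolding \<epsilon>_def exp_of_nat_mult[symmetric] by (simp add: field_simps)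
  have sw: "(\<epsilon>^j)^m = (\<epsilon>^m)^j" for j by (simp add: power_mult[symmetric] mult.commute)
  have en: "(\<epsilon>^m)^n = 1"
    using complex_root_unity[of n m] n unfolding em by simp
  show ?thesis
  proof (cases "n dvd m")
    case True
    hence "\<epsilon>^m = 1" using complex_root_unity_eq_1[OF n, of m] em by simp
    thus ?thesis using True by (simp add: sw)
  next
    case False
    hence "\<epsilon>^m \<noteq> 1" using complex_root_unity_eq_1[OF n, of m] em by simp
    thus ?thesis using False en by (simp add: sw sum_gp_strict)
  qed
qed

lemma coeff_bound:
  fixes c :: "nat \<Rightarrow> complex"
  assumes sums: "\<forall>z\<in>ball 0 1. (\<lambda>m. c m * z^m) sums f z"
    and bd: "\<forall>z\<in>ball 0 1. norm (f z) \<le> 1" and n: "n \<ge> 1"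
  shows "norm (c n) \<le> 1 - norm (c 0)^2"
proof -
  define \<epsilon> :: complex where "\<epsilon> = exp (2 * of_real pi * \<i> * of_nat 1 / of_nat n)"
  have ne: "norm \<epsilon> = 1" unfolding \<epsilon>_def by (simp add: norm_exp_eq_Re)
  define F where "F = Abs_fps (\<lambda>q. c (q*n))"
  have key: "(\<lambda>q. c (q*n) * w^q) sums ((\<Sum>j<n. f (\<epsilon>^j * z)) / of_nat n)
             \<and> norm ((\<Sum>j<n. f (\<epsilon>^j * z)) / of_nat n) \<le> 1"
    if w: "w \<in> ball 0 1" and z: "z^n = w" for w z
  proof -
    have "norm z ^ n < 1" using w z by (metis mem_ball_0 norm_power)
    hence zl: "norm z < 1" using n by (metis norm_ge_zero power_less_one_iff not_one_le_zero) 
    have ejz: "\<epsilon>^j * z \<in> ball 0 1" for j using zl ne by (simp add: norm_mult norm_power)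
    have "(\<lambda>m. \<Sum>j<n. c m * (\<epsilon>^j * z)^m) sums (\<Sum>j<n. f (\<epsilon>^j * z))"
      by (rule sums_sum) (use sums ejz in auto)
    moreover have "(\<Sum>j<n. c m * (\<epsilon>^j * z)^m) = (if n dvd m then of_nat n * c m * z^m else 0)" for m
    proof -
      have "(\<Sum>j<n. c m * (\<epsilon>^j * z)^m) = c m * z^m * (\<Sum>j<n. (\<epsilon>^j)^m)"
        by (simp add: sum_distrib_left power_mult_distrib mult_ac)
      also have "\<dots> = (if n dvd m then of_nat n * c m * z^m else 0)"
        unfolding \<epsilon>_def root_unity_sum[OF n] by simp
      finally show ?thesis .
    qed
    ultimately have s1: "(\<lambda>m. if n dvd m then of_nat n * c m * z^m else 0) sums (\<Sum>j<n. f (\<epsilon>^j * z))"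
      by simp
    have sm: "strict_mono (\<lambda>q. q * n)" using n by (intro strict_monoI) auto
    have "(\<lambda>q. (\<lambda>m. if n dvd m then of_nat n * c m * z^m else 0) (q * n)) sums (\<Sum>j<n. f (\<epsilon>^j * z))"
      by (subst sums_mono_reindex[OF sm]) (use s1 in \<open>auto simp: dvd_def mult.commute\<close>)
    hence "(\<lambda>q. of_nat n * (c (q*n) * w^q)) sums (\<Sum>j<n. f (\<epsilon>^j * z))"
      by (simp add: power_mult[symmetric] z[symmetric] mult.commute mult.left_commute)
    hence "(\<lambda>q. of_nat n * (c (q*n) * w^q) / of_nat n) sums ((\<Sum>j<n. f (\<epsilon>^j * z)) / of_nat n)"
      by (rule sums_divide)
    hence s2: "(\<lambda>q. c (q*n) * w^q) sums ((\<Sum>j<n. f (\<epsilon>^j * z)) / of_nat n)"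
      using n by simp
    have "norm (\<Sum>j<n. f (\<epsilon>^j * z)) \<le> (\<Sum>j<n. norm (f (\<epsilon>^j * z)))" by (rule norm_sum)
    also have "\<dots> \<le> (\<Sum>j<n. 1)" by (intro sum_mono) (use bd ejz in auto)
    finally have "norm (\<Sum>j<n. f (\<epsilon>^j * z)) \<le> of_nat n" by simp
    hence "norm ((\<Sum>j<n. f (\<epsilon>^j * z)) / of_nat n) \<le> 1"
      using n by (simp add: norm_divide divide_le_eq_1)
    with s2 show ?thesis by blast
  qed
  have root: "\<exists>z. z^n = w" for w :: complex
  proof (cases "w = 0")
    case True thus ?thesis using n by (intro exI[of _ 0]) auto
  next
    case False
    have "exp (Ln w / of_nat n) ^ n = w"
      using False n by (simp add: exp_of_nat_mult[symmetric])
    thus ?thesis by blast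
  qed
  have evF: "(\<lambda>q. c (q*n) * w^q) sums eval_fps F w \<and> norm (eval_fps F w) \<le> 1" if w: "w \<in> ball 0 1" for w
  proof -
    obtain z where z: "z^n = w" using root by blast
    from key[OF w z] show ?thesis unfolding eval_fps_def F_def by (simp add: sums_iff)
  qed
  have rad: "fps_conv_radius F \<ge> 1"
    unfolding fps_conv_radius_def
  proof (rule conv_radius_geI_ex')
    fix r :: real assume r: "0 < r" "ereal r < 1"
    hence "of_real r \<in> ball (0::complex) 1" by simp
    from evF[OF this] show "summable (\<lambda>q. fps_nth F q * of_real r ^ q)"
      by (simp add: F_def sums_iff)
  qed
  have sub: "ball (0::complex) 1 \<subseteq> eball 0 (fps_conv_radius F)"
  proof (rule subsetI)
    fix w :: complex assume "w \<in> ball 0 1"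
    hence "ereal (norm w) < 1" by simp
    also have "\<dots> \<le> fps_conv_radius F" by (rule rad)
    finally have "ereal (dist 0 w) < fps_conv_radius F" by simp
    thus "w \<in> eball 0 (fps_conv_radius F)" by simp
  qed
  have hol: "eval_fps F holomorphic_on ball 0 1" by (rule holomorphic_on_eval_fps[OF sub])
  have "norm (deriv (eval_fps F) 0) \<le> 1 - norm (eval_fps F 0)^2"
    by (rule schwarz_pick0[OF hol]) (use evF in auto)
  moreover have "deriv (eval_fps F) 0 = c n"
  proof -
    have "ereal (norm (0::complex)) < 1" by simp
    also have "\<dots> \<le> fps_conv_radius F" by (rule rad)
    finally have "norm (0::complex) < fps_conv_radius F" .
    hence "deriv (eval_fps F) 0 = eval_fps (fps_deriv F) 0" by (simp add: eval_fps_deriv)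
    thus ?thesis by (simp add: eval_fps_at_0 F_def)
  qed
  moreover have "eval_fps F 0 = c 0" by (simp add: eval_fps_at_0 F_def)
  ultimately show ?thesis by simp
qed


lemma omega_exists:
  fixes P Q :: "complex \<Rightarrow> complex"
  assumes holP: "P holomorphic_on S" and holQ: "Q holomorphic_on S"
    and S: "open S" "connected S" and k: "k \<ge> 0"
    and le: "\<forall>z\<in>S. norm (Q z) \<le> k * norm (P z)"
  shows "\<exists>\<omega>. \<omega> holomorphic_on S \<and> (\<forall>z\<in>S. norm (\<omega> z) \<le> k \<and> Q z = \<omega> z * P z)"
proof (cases "\<forall>z\<in>S. P z = 0")
  case True
  hence "\<forall>z\<in>S. Q z = 0" using le by fastforce
  thus ?thesis using True k by (intro exI[of _ "\<lambda>_. 0"]) auto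
next
  case False
  then obtain \<beta> where \<beta>: "\<beta> \<in> S" "P \<beta> \<noteq> 0" by blast
  define \<omega> where "\<omega> z = (if P z \<noteq> 0 then Q z / P z else Lim (at z) (\<lambda>w. Q w / P w))" for z
  have loc: "\<exists>e>0. ball z0 e \<subseteq> S \<and> \<omega> holomorphic_on ball z0 e \<and> norm (\<omega> z0) \<le> k" if z0: "z0 \<in> S" for z0
  proof (cases "P z0 = 0")
    case False
    have "continuous (at z0) P"
      using holP S z0 by (meson continuous_on_eq_continuous_at holomorphic_on_imp_continuous_on)
    hence "\<forall>\<^sub>F w in at z0. P w \<noteq> 0" using False by (simp add: continuous_at tendsto_imp_eventually_ne)
    hence "\<forall>\<^sub>F w in nhds z0. P w \<noteq> 0" unfolding eventually_at_filter
      by (rule eventually_mono) (use False in auto)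
    moreover have "\<forall>\<^sub>F w in nhds z0. w \<in> S" using S z0 by (intro eventually_nhds_in_open) auto
    ultimately have "\<forall>\<^sub>F w in nhds z0. P w \<noteq> 0 \<and> w \<in> S" by eventually_elim auto
    then obtain e where e0: "e > 0" and e1: "\<forall>w. dist w z0 < e \<longrightarrow> P w \<noteq> 0 \<and> w \<in> S"
      unfolding eventually_nhds_metric by blast
    have e: "e > 0" "\<And>w. w \<in> ball z0 e \<Longrightarrow> P w \<noteq> 0 \<and> w \<in> S"
      using e0 e1 by (auto simp: mem_ball dist_commute)
    have hP: "P holomorphic_on ball z0 e" by (rule holomorphic_on_subset[OF holP]) (use e in auto)
    have hQ: "Q holomorphic_on ball z0 e" by (rule holomorphic_on_subset[OF holQ]) (use e in auto)
    have "(\<lambda>w. Q w / P w) holomorphic_on ball z0 e"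
      using e hP hQ by (intro holomorphic_intros) auto
    also have "?this \<longleftrightarrow> \<omega> holomorphic_on ball z0 e"
      using e by (intro holomorphic_cong) (auto simp: \<omega>_def)
    finally have "\<omega> holomorphic_on ball z0 e" .
    moreover have "norm (\<omega> z0) \<le> k"
      using False le z0 by (simp add: \<omega>_def norm_divide divide_le_eq)
    ultimately show ?thesis using e by (intro exI[of _ e]) auto
  next
    case True
    obtain r where r: "0 < r" "ball z0 r \<subseteq> S" "\<And>z. z \<in> ball z0 r - {z0} \<Longrightarrow> P z \<noteq> 0"
      using isolated_zeros[OF holP S z0 True \<beta>] by blast
    have hP: "P holomorphic_on ball z0 r - {z0}" by (rule holomorphic_on_subset[OF holP]) (use r in auto)
    have hQ: "Q holomorphic_on ball z0 r - {z0}" by (rule holomorphic_on_subset[OF holQ]) (use r in auto)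
    have hq: "(\<lambda>w. Q w / P w) holomorphic_on ball z0 r - {z0}"
      using r hP hQ by (intro holomorphic_intros) auto
    have bdq: "norm (Q w / P w) \<le> k" if "w \<in> ball z0 r - {z0}" for w
    proof -
      have "w \<in> S" "P w \<noteq> 0" using r(2) r(3)[OF that] that by auto
      thus ?thesis using le by (auto simp: norm_divide divide_le_eq)
    qed
    have "\<forall>\<^sub>F w in at z0. w \<in> ball z0 r"
      using eventually_at_ball[OF r(1), of z0 UNIV] by simp
    moreover have "\<forall>\<^sub>F w in at z0. w \<noteq> z0" by (simp add: eventually_at_filter)
    ultimately have "\<forall>\<^sub>F w in at z0. w \<in> ball z0 r - {z0}" by eventually_elim auto
    hence evb: "\<forall>\<^sub>F w in at z0. norm (Q w / P w) \<le> k"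
      by eventually_elim (use bdq in auto)
    obtain g where g: "g holomorphic_on ball z0 r" "\<forall>z\<in>ball z0 r - {z0}. g z = Q z / P z"
      using holomorphic_on_extend_bounded[OF hq] r(1) evb by (auto simp: interior_open)
    have "continuous (at z0) g"
      using g(1) r(1) by (meson centre_in_ball continuous_on_eq_continuous_at holomorphic_on_imp_continuous_on open_ball)
    hence "(g \<longlongrightarrow> g z0) (at z0)" by (simp add: continuous_at)
    hence lim: "((\<lambda>w. Q w / P w) \<longlongrightarrow> g z0) (at z0)"
      by (rule Lim_transform_within_open[of _ _ _ _ "ball z0 r"]) (use r(1) g(2) in auto)
    have \<omega>z0: "\<omega> z0 = g z0" using True lim by (simp add: \<omega>_def tendsto_Lim)
    have "g holomorphic_on ball z0 r" by (rule g(1))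
    also have "?this \<longleftrightarrow> \<omega> holomorphic_on ball z0 r"
    proof (intro holomorphic_cong refl)
      fix z assume z: "z \<in> ball z0 r"
      show "g z = \<omega> z"
      proof (cases "z = z0")
        case True thus ?thesis using \<omega>z0 by simp
      next
        case False
        hence "z \<in> ball z0 r - {z0}" using z by simp
        thus ?thesis using r(3) g(2) by (simp add: \<omega>_def)
      qed
    qed
    finally have "\<omega> holomorphic_on ball z0 r" .
    moreover have "norm (\<omega> z0) \<le> k"
      unfolding \<omega>z0 by (rule Lim_norm_ubound[OF _ lim evb]) simp
    ultimately show ?thesis using r by (intro exI[of _ r]) auto
  qed
  have "\<omega> analytic_on S" unfolding analytic_on_def using loc by blast
  hence "\<omega> holomorphic_on S" by (rule analytic_imp_holomorphic)
  moreover have "norm (\<omega> z) \<le> k \<and> Q z = \<omega> z * P z" if "z \<in> S" for z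
  proof -
    have "norm (\<omega> z) \<le> k" using loc[OF that] by blast
    moreover have "Q z = \<omega> z * P z"
    proof (cases "P z = 0")
      case True thus ?thesis using le that by auto
    qed (simp add: \<omega>_def)
    ultimately show ?thesis by blast
  qed
  ultimately show ?thesis by blast
qed


lemma tail_bound:
  fixes X :: "nat \<Rightarrow> real"
  assumes X0: "\<forall>j. 0 \<le> X j" and XC: "\<forall>j. X (Suc j) \<le> C" and r: "0 \<le> r" "r < 1"
  shows "summable (\<lambda>j. X (Suc j) * r^(Suc j))" "summable (\<lambda>j. X j * r^j)"
    "(\<Sum>j. X j * r^j) = X 0 + (\<Sum>j. X (Suc j) * r^(Suc j))"
    "(\<Sum>j. X (Suc j) * r^(Suc j)) \<le> C * r / (1 - r)"
proof -
  have geo: "(\<lambda>j. C * r^(Suc j)) sums (C * r / (1 - r))"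
  proof -
    have "(\<lambda>j. r^j) sums (1 / (1 - r))" using r by (intro geometric_sums) simp
    hence "(\<lambda>j. (C * r) * r^j) sums ((C * r) * (1 / (1 - r)))" by (rule sums_mult)
    thus ?thesis by (simp add: mult_ac)
  qed
  have le: "norm (X (Suc j) * r^(Suc j)) \<le> C * r^(Suc j)" for j
    using X0 XC r by (simp add: abs_mult mult_right_mono)
  show s1: "summable (\<lambda>j. X (Suc j) * r^(Suc j))"
    by (rule summable_comparison_test[OF _ sums_summable[OF geo]]) (use le in auto)
  have "summable (\<lambda>j. (\<lambda>j. X j * r^j) (Suc j))" using s1 by simp
  thus s2: "summable (\<lambda>j. X j * r^j)" by (rule summable_Suc_iff[THEN iffD1])
  show "(\<Sum>j. X j * r^j) = X 0 + (\<Sum>j. X (Suc j) * r^(Suc j))"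
    using suminf_split_head[OF s2] by simp
  show "(\<Sum>j. X (Suc j) * r^(Suc j)) \<le> C * r / (1 - r)"
    using suminf_le[OF _ s1 sums_summable[OF geo]] le sums_unique[OF geo] by (metis abs_le_D1 real_norm_def)
qed

lemma coeff_boundK:
  fixes c :: "nat \<Rightarrow> complex"
  assumes sums: "\<forall>z\<in>ball 0 1. (\<lambda>m. c m * z^m) sums f z"
    and bd: "\<forall>z\<in>ball 0 1. norm (f z) \<le> K" and K: "K > 0" and n: "n \<ge> 1"
  shows "norm (c n) \<le> K - norm (c 0)^2 / K"
proof -
  have "norm (c n / of_real K) \<le> 1 - norm (c 0 / of_real K)^2"
  proof (rule coeff_bound[where f="\<lambda>z. f z / of_real K"])
    show "\<forall>z\<in>ball 0 1. (\<lambda>m. c m / of_real K * z ^ m) sums (f z / of_real K)"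
    proof
      fix z :: complex assume "z \<in> ball 0 1"
      hence "(\<lambda>m. c m * z^m / of_real K) sums (f z / of_real K)" using sums by (intro sums_divide) auto
      thus "(\<lambda>m. c m / of_real K * z ^ m) sums (f z / of_real K)" by (simp add: field_simps)
    qed
    show "\<forall>z\<in>ball 0 1. norm (f z / of_real K) \<le> 1"
      using bd K by (auto simp: norm_divide divide_le_eq)
  qed (rule n)
  hence "norm (c n) / K \<le> 1 - (norm (c 0) / K)^2" using K by (simp add: norm_divide)
  hence "norm (c n) / K * K \<le> (1 - (norm (c 0) / K)^2) * K" using K by (intro mult_right_mono) auto
  moreover have "norm (c n) / K * K = norm (c n)" using K by simp
  moreover have "(1 - (norm (c 0) / K)^2) * K = K - norm (c 0)^2 / K" using K by (simp add: field_simps power2_eq_square)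
  ultimately show ?thesis by linarith
qed

lemma fps_expansion_unique:
  fixes f g :: "complex \<Rightarrow> complex"
  assumes "f has_fps_expansion F" "g has_fps_expansion G" "eventually (\<lambda>z. f z = g z) (nhds 0)"
  shows "F = G"
proof (rule fps_ext)
  fix n
  have "fps_nth F n = (deriv ^^ n) f 0 / fact n" by (rule fps_nth_fps_expansion[OF assms(1)])
  also have "(deriv ^^ n) f 0 = (deriv ^^ n) g 0" by (intro higher_deriv_cong_ev refl assms(3))
  also have "\<dots> / fact n = fps_nth G n" by (rule fps_nth_fps_expansion[OF assms(2), symmetric])
  finally show "fps_nth F n = fps_nth G n" .
qed

lemma expansion_from_sums:
  fixes f :: "complex \<Rightarrow> complex"
  assumes "\<forall>z\<in>ball 0 1. (\<lambda>n. c n * z^n) sums f z"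
  shows "f has_fps_expansion Abs_fps c"
proof (rule has_fps_expansionI)
  have "eventually (\<lambda>z. z \<in> ball (0::complex) 1) (nhds 0)" by (rule eventually_nhds_ball) simp
  thus "\<forall>\<^sub>F u in nhds 0. (\<lambda>n. fps_nth (Abs_fps c) n * u ^ n) sums f u"
    by eventually_elim (use assms in auto)
qed


lemma main_disk:
  fixes H G :: "complex \<Rightarrow> complex" and A B :: "nat \<Rightarrow> complex" and k r :: real
  assumes holH: "H holomorphic_on ball 0 1" and holG: "G holomorphic_on ball 0 1"
    and bdH: "\<forall>z\<in>ball 0 1. norm (H z) \<le> 1"
    and sA: "\<forall>z\<in>ball 0 1. (\<lambda>n. A n * z^n) sums H z"
    and sB: "\<forall>z\<in>ball 0 1. (\<lambda>n. B (Suc n) * z^(Suc n)) sums G z"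
    and dG: "\<forall>z\<in>ball 0 1. norm (deriv G z) \<le> k * norm (deriv H z)"
    and k: "0 \<le> k" "k < 1" and r: "0 \<le> r" "r \<le> 1/(2*k+3)"
  shows "summable (\<lambda>n. norm (A n) * r^n) \<and> summable (\<lambda>n. norm (B (Suc n)) * r^(Suc n)) \<and>
         (\<Sum>n. norm (A n) * r^n) + (\<Sum>n. norm (B (Suc n)) * r^(Suc n)) \<le> 1"
proof -
  have "1/(2*k+3) \<le> 1/3" using k by (intro divide_left_mono) auto
  hence r3: "r \<le> 1/3" using r by linarith
  hence r1: "r < 1" by simp
  define a0 where "a0 = norm (A 0)"
  have "(\<lambda>n. A n * 0^n) sums H 0" by (rule bspec[OF sA]) simp
  hence A0: "A 0 = H 0" using powser_sums_zero[of A] sums_unique2 by blast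
  have a01: "a0 \<le> 1" "0 \<le> a0" using bdH A0 by (auto simp: a0_def)
  have Abd: "\<forall>j. norm (A (Suc j)) \<le> 1 - a0^2"
    using coeff_bound[OF sA bdH] by (simp add: a0_def)
  have holH': "deriv H holomorphic_on ball 0 1" by (rule holomorphic_deriv[OF holH]) simp
  have holG': "deriv G holomorphic_on ball 0 1" by (rule holomorphic_deriv[OF holG]) simp
  obtain \<omega> where \<omega>: "\<omega> holomorphic_on ball 0 1"
      "\<forall>z\<in>ball 0 1. norm (\<omega> z) \<le> k \<and> deriv G z = \<omega> z * deriv H z"
    using omega_exists[OF holH' holG' open_ball connected_ball k(1) dG] by blast
  define W where "W j = (deriv ^^ j) \<omega> 0 / fact j" for j
  have sW: "\<forall>z\<in>ball 0 1. (\<lambda>j. W j * z^j) sums \<omega> z"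
    using holomorphic_power_series[OF \<omega>(1)] by (simp add: W_def)
  have W0: "W 0 = \<omega> 0" by (simp add: W_def)
  define w0 where "w0 = norm (W 0)"
  have w0k: "w0 \<le> k" "0 \<le> w0" using \<omega>(2) W0 w0_def by auto
  define C where "C = (if k > 0 then k - w0^2/k else 0)"
  have Wbd: "\<forall>j. norm (W (Suc j)) \<le> C"
  proof
    fix j
    show "norm (W (Suc j)) \<le> C"
    proof (cases "k > 0")
      case True
      thus ?thesis using coeff_boundK[OF sW _ True, of "Suc j"] \<omega>(2) by (simp add: C_def w0_def)
    next
      case False
      hence k0: "k = 0" using k by simp
      have "norm (W (Suc j)) \<le> 0 + K" if "K > 0" for K
      proof -
        have "norm (W (Suc j)) \<le> K - norm (W 0)^2/K"
          using coeff_boundK[OF sW _ that, of "Suc j"] \<omega>(2) k0 that by auto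
        also have "\<dots> \<le> K" using that by simp
        finally show ?thesis by simp
      qed
      hence "norm (W (Suc j)) \<le> 0" by (rule field_le_epsilon)
      thus ?thesis using False by (simp add: C_def)
    qed
  qed
  have C0: "C \<ge> 0"
  proof (cases "k > 0")
    case True
    have "w0^2 \<le> k^2" using w0k by (intro power_mono) auto
    hence "w0^2/k \<le> k^2/k" using True by (intro divide_right_mono) auto
    thus ?thesis using True by (simp add: C_def power2_eq_square)
  qed (simp add: C_def)
  note TW = tail_bound[of "\<lambda>j. norm (W j)" C r, OF _ Wbd r(1) r1, simplified]
  have rr: "r / (1 - r) \<le> 1/2" using r3 r1 by (simp add: divide_simps)
  have Wsum: "(\<Sum>j. norm (W j) * r^j) \<le> k"
  proof -
    have "(\<Sum>j. norm (W j) * r^j) = w0 + (\<Sum>j. norm (W (Suc j)) * r^(Suc j))"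
      using TW(3) by (simp add: w0_def)
    also have "\<dots> \<le> w0 + C * r / (1 - r)" using TW(4) by simp
    also have "C * r / (1 - r) = C * (r / (1 - r))" by simp
    also have "\<dots> \<le> C * (1/2)" using rr C0 by (intro mult_left_mono) auto
    also have "w0 + C * (1/2) \<le> k"
    proof (cases "k > 0")
      case True
      have "w0 + C * (1/2) = k - (k - w0)^2 / (2*k)"
        using True by (simp add: C_def field_simps power2_eq_square)
      also have "\<dots> \<le> k" using True by simp
      finally show ?thesis .
    next
      case False thus ?thesis using w0k by (simp add: C_def)
    qed
    finally show ?thesis by simp
  qed
  define B0 where "B0 n = (if n = 0 then 0 else B n)" for n
  have sB0: "\<forall>z\<in>ball 0 1. (\<lambda>n. B0 n * z^n) sums G z"
  proof
    fix z :: complex assume "z \<in> ball 0 1"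
    hence "(\<lambda>n. B0 (Suc n) * z^(Suc n)) sums G z" using sB by (simp add: B0_def)
    hence "(\<lambda>n. B0 n * z^n) sums (G z + B0 0 * z^0)" by (subst (asm) sums_Suc_iff)
    thus "(\<lambda>n. B0 n * z^n) sums G z" by (simp add: B0_def)
  qed
  have eH: "H has_fps_expansion Abs_fps A" by (rule expansion_from_sums[OF sA])
  have eG: "G has_fps_expansion Abs_fps B0" by (rule expansion_from_sums[OF sB0])
  have eW: "\<omega> has_fps_expansion Abs_fps W" by (rule expansion_from_sums[OF sW])
  have e1: "deriv G has_fps_expansion fps_deriv (Abs_fps B0)" by (rule has_fps_expansion_deriv[OF eG])
  have e2: "(\<lambda>x. \<omega> x * deriv H x) has_fps_expansion Abs_fps W * fps_deriv (Abs_fps A)"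
    by (intro has_fps_expansion_mult eW has_fps_expansion_deriv eH)
  have "eventually (\<lambda>z. z \<in> ball (0::complex) 1) (nhds 0)" by (rule eventually_nhds_ball) simp
  hence ev: "eventually (\<lambda>z. deriv G z = \<omega> z * deriv H z) (nhds 0)"
    by (rule eventually_mono) (use \<omega>(2) in auto)
  have feq: "fps_deriv (Abs_fps B0) = Abs_fps W * fps_deriv (Abs_fps A)"
    by (rule fps_expansion_unique[OF e1 e2 ev])
  have coef: "of_nat (n + 1) * B (n + 1) = (\<Sum>i=0..n. W i * (of_nat (n - i + 1) * A (n - i + 1)))" for n
  proof -
    have "fps_deriv (Abs_fps B0) $ n = (Abs_fps W * fps_deriv (Abs_fps A)) $ n" using feq by simp
    thus ?thesis by (simp add: fps_mult_nth B0_def)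
  qed
  have Bbd: "norm (B (Suc n)) \<le> (\<Sum>i=0..n. norm (W i) * norm (A (n - i + 1)))" for n
  proof -
    have "real (n + 1) * norm (B (n + 1)) = norm (of_nat (n + 1) * B (n + 1))"
      unfolding norm_mult norm_of_nat ..
    also have "\<dots> \<le> (\<Sum>i=0..n. norm (W i * (of_nat (n - i + 1) * A (n - i + 1))))"
      unfolding coef by (rule norm_sum)
    also have "\<dots> \<le> (\<Sum>i=0..n. real (n + 1) * (norm (W i) * norm (A (n - i + 1))))"
    proof (rule sum_mono)
      fix i assume "i \<in> {0..n}"
      have "norm (W i * (of_nat (n - i + 1) * A (n - i + 1))) = real (n - i + 1) * (norm (W i) * norm (A (n - i + 1)))"
        unfolding norm_mult norm_of_nat by simp
      also have "\<dots> \<le> real (n + 1) * (norm (W i) * norm (A (n - i + 1)))"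
        by (intro mult_right_mono) auto
      finally show "norm (W i * (of_nat (n - i + 1) * A (n - i + 1))) \<le> real (n + 1) * (norm (W i) * norm (A (n - i + 1)))" .
    qed
    also have "\<dots> = real (n + 1) * (\<Sum>i=0..n. norm (W i) * norm (A (n - i + 1)))"
      by (simp add: sum_distrib_left)
    finally show ?thesis by simp
  qed
  define X where "X i = norm (W i) * r^i" for i
  define Y where "Y j = norm (A (Suc j)) * r^(Suc j)" for j
  note TA = tail_bound[of "\<lambda>j. norm (A j)" "1 - a0^2" r, OF _ Abd r(1) r1, simplified]
  have sX: "summable (\<lambda>i. norm (X i))" using TW(2) by (simp add: X_def abs_mult r(1))
  have sY: "summable (\<lambda>j. norm (Y j))" using TA(1) by (simp add: Y_def abs_mult r(1))
  have sY': "summable Y" using TA(1) by (simp add: Y_def[abs_def])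
  have Y0: "0 \<le> Y j" for j using r(1) by (simp add: Y_def)
  have CP: "(\<lambda>n. \<Sum>i\<le>n. X i * Y (n - i)) sums ((\<Sum>i. X i) * (\<Sum>j. Y j))"
    by (rule Cauchy_product_sums[OF sX sY])
  have XY: "norm (norm (B (Suc n)) * r^(Suc n)) \<le> (\<Sum>i\<le>n. X i * Y (n - i))" for n
  proof -
    have "norm (norm (B (Suc n)) * r^(Suc n)) = norm (B (Suc n)) * r^(Suc n)" using r(1) by (simp add: abs_mult)
    also have "\<dots> \<le> (\<Sum>i=0..n. norm (W i) * norm (A (n - i + 1))) * r^(Suc n)"
      using Bbd r(1) by (intro mult_right_mono) auto
    also have "\<dots> = (\<Sum>i\<le>n. X i * Y (n - i))"
      unfolding sum_distrib_right atLeast0AtMost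
    proof (rule sum.cong[OF refl])
      fix i assume "i \<in> {..n}"
      hence "r^(Suc n) = r^i * r^(Suc (n - i))" by (simp add: power_add[symmetric])
      thus "norm (W i) * norm (A (n - i + 1)) * r ^ Suc n = X i * Y (n - i)"
        by (simp add: X_def Y_def)
    qed
    finally show ?thesis .
  qed
  have sBr: "summable (\<lambda>n. norm (B (Suc n)) * r^(Suc n))"
    by (rule summable_comparison_test[OF _ sums_summable[OF CP]]) (use XY in auto)
  have "(\<Sum>n. norm (B (Suc n)) * r^(Suc n)) \<le> (\<Sum>n. \<Sum>i\<le>n. X i * Y (n - i))"
  proof (rule suminf_le[OF _ sBr sums_summable[OF CP]])
    fix n
    show "norm (B (Suc n)) * r^(Suc n) \<le> (\<Sum>i\<le>n. X i * Y (n - i))"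
      using XY[of n] by (metis abs_ge_self order_trans real_norm_def)
  qed
  also have "\<dots> = (\<Sum>i. X i) * (\<Sum>j. Y j)" using CP by (simp add: sums_iff)
  also have "\<dots> \<le> k * (\<Sum>j. Y j)"
  proof (rule mult_right_mono)
    show "(\<Sum>i. X i) \<le> k" using Wsum by (simp add: X_def)
    show "0 \<le> (\<Sum>j. Y j)" by (intro suminf_nonneg sY' Y0)
  qed
  finally have Bsum: "(\<Sum>n. norm (B (Suc n)) * r^(Suc n)) \<le> k * (\<Sum>j. Y j)" .
  define T where "T = (\<Sum>j. Y j)"
  have T0: "T \<ge> 0" unfolding T_def by (intro suminf_nonneg sY' Y0)
  have Tb: "T \<le> (1 - a0^2) * (r / (1 - r))" using TA(4) by (simp add: T_def Y_def)
  have Asum: "(\<Sum>n. norm (A n) * r^n) = a0 + T" using TA(3) by (simp add: T_def Y_def a0_def)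
  have q: "(1 + k) * (r / (1 - r)) \<le> 1/2"
  proof -
    have "r * (2*k+3) \<le> 1" using r k by (simp add: field_simps)
    thus ?thesis using r1 by (simp add: field_simps)
  qed
  have a2: "0 \<le> 1 - a0^2" using a01 by (simp add: power_le_one)
  have "(1 + k) * T \<le> (1 + k) * ((1 - a0^2) * (r / (1 - r)))"
    using Tb k by (intro mult_left_mono) auto
  also have "\<dots> = (1 - a0^2) * ((1 + k) * (r / (1 - r)))" by simp
  also have "\<dots> \<le> (1 - a0^2) * (1/2)" using q a2 by (intro mult_left_mono) auto
  finally have kT: "(1 + k) * T \<le> (1 - a0^2) / 2" by simp
  have "a0 + (1 - a0^2)/2 \<le> 1"
  proof -
    have "0 \<le> (1 - a0)^2" by simp
    hence "a0 * 2 \<le> 1 + a0 * a0" by (simp add: power2_eq_square algebra_simps)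
    thus ?thesis unfolding power2_eq_square by (simp add: field_simps)
  qed
  moreover have "(1 + k) * T = T + k * T" by (simp add: algebra_simps)
  ultimately have "a0 + T + k * T \<le> 1" using kT
    by (metis (no_types, opaque_lifting) add.assoc add_left_mono order_trans)
  thus ?thesis using TA(2) sBr Asum Bsum T_def by auto
qed


lemma part1:
  fixes \<gamma> k \<rho> :: real
  assumes g: "0 \<le> \<gamma>" "\<gamma> < 1" and k: "0 \<le> k" "k < 1"
    and hyp: "harm_hyp \<gamma> k h g a b" and \<rho>: "0 \<le> \<rho>" "\<rho> \<le> 1 / (2 * k + 3)"
  shows "bohr_ineq \<gamma> a b \<rho>"
proof -
  define R where "R = 1 / (1 - \<gamma>)"
  have R0: "R > 0" using g by (simp add: R_def)
  define c where "c = omega_center \<gamma>"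
  have Om: "Omega \<gamma> = ball c R" by (simp add: Omega_def R_def c_def)
  have inO: "c + of_real R * z \<in> Omega \<gamma>" if "z \<in> ball 0 1" for z
  proof -
    have "dist c (c + of_real R * z) = R * norm z" using R0 by (simp add: dist_norm norm_mult)
    also have "\<dots> < R" using that R0 by simp
    finally show ?thesis by (simp add: Om)
  qed
  note hh = hyp[unfolded harm_hyp_def]
  have holh: "h holomorphic_on Omega \<gamma>" and holg: "g holomorphic_on Omega \<gamma>" using hh by auto
  have opO: "open (Omega \<gamma>)" by (simp add: Om)
  define H where "H z = h (c + of_real R * z)" for z
  define G where "G z = g (c + of_real R * z)" for z
  define A where "A n = a n * of_real R ^ n" for n
  define B where "B n = b n * of_real R ^ n" for n
  have mapsto: "(\<lambda>z. c + of_real R * z) ` ball 0 1 \<subseteq> Omega \<gamma>" using inO by auto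
  have holH: "H holomorphic_on ball 0 1"
    unfolding H_def by (rule holomorphic_on_compose_gen[OF _ holh mapsto, unfolded o_def]) (auto intro!: holomorphic_intros)
  have holG: "G holomorphic_on ball 0 1"
    unfolding G_def by (rule holomorphic_on_compose_gen[OF _ holg mapsto, unfolded o_def]) (auto intro!: holomorphic_intros)
  have bdH: "\<forall>z\<in>ball 0 1. norm (H z) \<le> 1" using hh inO by (auto simp: H_def)
  have sA: "\<forall>z\<in>ball 0 1. (\<lambda>n. A n * z^n) sums H z"
  proof
    fix z :: complex assume z: "z \<in> ball 0 1"
    have "(\<lambda>n. a n * (c + of_real R * z - omega_center \<gamma>) ^ n) sums h (c + of_real R * z)"
      using hh inO[OF z] by auto
    thus "(\<lambda>n. A n * z^n) sums H z" by (simp add: A_def H_def c_def power_mult_distrib mult_ac)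
  qed
  have sB: "\<forall>z\<in>ball 0 1. (\<lambda>n. B (Suc n) * z^(Suc n)) sums G z"
  proof
    fix z :: complex assume z: "z \<in> ball 0 1"
    have "(\<lambda>n. b (Suc n) * (c + of_real R * z - omega_center \<gamma>) ^ Suc n) sums g (c + of_real R * z)"
      using hh inO[OF z] by auto
    thus "(\<lambda>n. B (Suc n) * z^(Suc n)) sums G z"
      by (simp only: B_def G_def c_def add_diff_cancel_left' power_mult_distrib mult_ac)
  qed
  have dcomp: "deriv (\<lambda>z. f (c + of_real R * z)) z = deriv f (c + of_real R * z) * of_real R"
    if "f holomorphic_on Omega \<gamma>" "z \<in> ball 0 1" for f z
  proof -
    have d1: "(f has_field_derivative deriv f (c + of_real R * z)) (at (c + of_real R * z))"
      by (rule holomorphic_derivI[OF that(1) opO inO[OF that(2)]])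
    have d2: "((\<lambda>z. c + of_real R * z) has_field_derivative of_real R) (at z)"
      by (auto intro!: derivative_eq_intros)
    show ?thesis by (rule DERIV_imp_deriv) (rule DERIV_chain2[OF d1 d2])
  qed
  have dG: "\<forall>z\<in>ball 0 1. norm (deriv G z) \<le> k * norm (deriv H z)"
  proof
    fix z :: complex assume z: "z \<in> ball 0 1"
    have "norm (deriv G z) = norm (deriv g (c + of_real R * z)) * R"
      unfolding G_def dcomp[OF holg z] using R0 by (simp add: norm_mult)
    also have "\<dots> \<le> k * norm (deriv h (c + of_real R * z)) * R"
      using hh inO[OF z] R0 by (intro mult_right_mono) auto
    also have "\<dots> = k * norm (deriv H z)"
      unfolding H_def dcomp[OF holh z] using R0 by (simp add: norm_mult)
    finally show "norm (deriv G z) \<le> k * norm (deriv H z)" .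
  qed
  have M: "summable (\<lambda>n. norm (A n) * \<rho>^n) \<and> summable (\<lambda>n. norm (B (Suc n)) * \<rho>^(Suc n)) \<and>
         (\<Sum>n. norm (A n) * \<rho>^n) + (\<Sum>n. norm (B (Suc n)) * \<rho>^(Suc n)) \<le> 1"
    by (rule main_disk[OF holH holG bdH sA sB dG k \<rho>])
  have nA: "norm (A n) = norm (a n) / (1 - \<gamma>) ^ n" for n
  proof -
    have "norm (A n) = norm (a n) * R^n" unfolding A_def norm_mult norm_power norm_of_real using R0 by simp
    also have "R^n = 1 / (1 - \<gamma>)^n" by (simp add: R_def power_one_over)
    finally show ?thesis by simp
  qed
  have nB: "norm (B n) = norm (b n) / (1 - \<gamma>) ^ n" for n
  proof -
    have "norm (B n) = norm (b n) * R^n" unfolding B_def norm_mult norm_power norm_of_real using R0 by simp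
    also have "R^n = 1 / (1 - \<gamma>)^n" by (simp add: R_def power_one_over)
    finally show ?thesis by simp
  qed
  show ?thesis using M unfolding bohr_ineq_def nA nB .
qed


definition extA :: "real \<Rightarrow> nat \<Rightarrow> complex" where
  "extA \<alpha> n = (if n = 0 then complex_of_real \<alpha> else - complex_of_real ((1 - \<alpha>^2) * \<alpha>^(n-1)))"

lemma extA_norm:
  assumes "0 < \<alpha>" "\<alpha> < 1"
  shows "norm (extA \<alpha> 0) = \<alpha>" "norm (extA \<alpha> (Suc n)) = (1 - \<alpha>^2) * \<alpha>^n"
proof -
  show "norm (extA \<alpha> 0) = \<alpha>" using assms by (simp add: extA_def)
  have nn: "0 \<le> (1 - \<alpha>^2) * \<alpha>^n" using assms by (simp add: power_le_one)
  have e: "extA \<alpha> (Suc n) = - of_real ((1 - \<alpha>^2) * \<alpha>^n)" by (simp add: extA_def)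
  have "norm (extA \<alpha> (Suc n)) = \<bar>(1 - \<alpha>^2) * \<alpha>^n\<bar>" unfolding e norm_minus_cancel norm_of_real ..
  thus "norm (extA \<alpha> (Suc n)) = (1 - \<alpha>^2) * \<alpha>^n" using nn by simp
qed

lemma extremal_sums:
  fixes \<alpha> s :: real assumes a: "0 < \<alpha>" "\<alpha> < 1" and s: "0 \<le> s" "s < 1"
  shows "(\<lambda>n. norm (extA \<alpha> (Suc n)) * s^(Suc n)) sums ((1 - \<alpha>^2) * s / (1 - \<alpha> * s))"
    "(\<lambda>n. norm (extA \<alpha> n) * s^n) sums (\<alpha> + (1 - \<alpha>^2) * s / (1 - \<alpha> * s))"
proof -
  have "\<alpha> * s \<le> 1 * s" using a s by (intro mult_right_mono) auto
  hence as: "\<bar>\<alpha> * s\<bar> < 1" using a s by (simp add: abs_of_nonneg)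
  have "(\<lambda>n. (\<alpha> * s)^n) sums (1 / (1 - \<alpha> * s))" using as by (intro geometric_sums) simp
  hence S: "(\<lambda>n. ((1 - \<alpha>^2) * s) * (\<alpha> * s)^n) sums (((1 - \<alpha>^2) * s) * (1 / (1 - \<alpha> * s)))" by (rule sums_mult)
  have eq: "norm (extA \<alpha> (Suc n)) * s^(Suc n) = ((1 - \<alpha>^2) * s) * (\<alpha> * s)^n" for n
    using a by (simp add: extA_norm power_mult_distrib)
  have fe: "(\<lambda>n. norm (extA \<alpha> (Suc n)) * s^(Suc n)) = (\<lambda>n. ((1 - \<alpha>^2) * s) * (\<alpha> * s)^n)"
    by (rule ext) (rule eq)
  have v: "((1 - \<alpha>^2) * s) * (1 / (1 - \<alpha> * s)) = (1 - \<alpha>^2) * s / (1 - \<alpha> * s)" by simp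
  show s1: "(\<lambda>n. norm (extA \<alpha> (Suc n)) * s^(Suc n)) sums ((1 - \<alpha>^2) * s / (1 - \<alpha> * s))"
    using S unfolding fe v .
  have "(\<lambda>n. norm (extA \<alpha> n) * s^n) sums ((1 - \<alpha>^2) * s / (1 - \<alpha> * s) + norm (extA \<alpha> 0) * s^0)"
    using s1 by (subst (asm) sums_Suc_iff)
  thus "(\<lambda>n. norm (extA \<alpha> n) * s^n) sums (\<alpha> + (1 - \<alpha>^2) * s / (1 - \<alpha> * s))"
    using a by (simp add: extA_norm add.commute)
qed

lemma extremal_fn:
  fixes \<alpha> :: real and z :: complex assumes a: "0 < \<alpha>" "\<alpha> < 1" and z: "norm z < 1"
  shows "(\<lambda>n. extA \<alpha> (Suc n) * z^(Suc n)) sums ((of_real \<alpha> - z) / (1 - of_real \<alpha> * z) - of_real \<alpha>)"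
    "(\<lambda>n. extA \<alpha> n * z^n) sums ((of_real \<alpha> - z) / (1 - of_real \<alpha> * z))"
proof -
  have "\<alpha> * norm z \<le> 1 * norm z" using a by (intro mult_right_mono) auto
  hence az: "norm (of_real \<alpha> * z) < 1" using a z by (simp add: norm_mult)
  hence nz: "1 - of_real \<alpha> * z \<noteq> 0" by (metis norm_one order.irrefl right_minus_eq)
  have "(\<lambda>n. (of_real \<alpha> * z)^n) sums (1 / (1 - of_real \<alpha> * z))" using az by (rule geometric_sums)
  hence "(\<lambda>n. (- of_real (1 - \<alpha>^2) * z) * (of_real \<alpha> * z)^n) sums ((- of_real (1 - \<alpha>^2) * z) * (1 / (1 - of_real \<alpha> * z)))"
    by (rule sums_mult)
  note S = this
  have eq: "extA \<alpha> (Suc n) * z^(Suc n) = (- of_real (1 - \<alpha>^2) * z) * (of_real \<alpha> * z)^n" for n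
    by (simp add: extA_def power_mult_distrib algebra_simps)
  have fe: "(\<lambda>n. extA \<alpha> (Suc n) * z^(Suc n)) = (\<lambda>n. (- of_real (1 - \<alpha>^2) * z) * (of_real \<alpha> * z)^n)"
    by (rule ext) (rule eq)
  have v: "(- of_real (1 - \<alpha>^2) * z) * (1 / (1 - of_real \<alpha> * z)) = (of_real \<alpha> - z) / (1 - of_real \<alpha> * z) - of_real \<alpha>"
    using nz by (simp add: field_simps power2_eq_square)
  show s1: "(\<lambda>n. extA \<alpha> (Suc n) * z^(Suc n)) sums ((of_real \<alpha> - z) / (1 - of_real \<alpha> * z) - of_real \<alpha>)"
    using S unfolding fe v .
  have "(\<lambda>n. extA \<alpha> n * z^n) sums ((of_real \<alpha> - z) / (1 - of_real \<alpha> * z) - of_real \<alpha> + extA \<alpha> 0 * z^0)"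
    using s1 by (subst (asm) sums_Suc_iff)
  thus "(\<lambda>n. extA \<alpha> n * z^n) sums ((of_real \<alpha> - z) / (1 - of_real \<alpha> * z))" by (simp add: extA_def)
qed


lemma choose_alpha:
  fixes s k :: real
  assumes k: "0 \<le> k" and s: "0 < s" "s < 1" "s > 1 / (2 * k + 3)"
  obtains \<alpha> where "0 < \<alpha>" "\<alpha> < 1" "\<alpha> + (1 + k) * ((1 - \<alpha>^2) * s / (1 - \<alpha> * s)) > 1"
proof -
  define \<alpha>0 where "\<alpha>0 = (1 - s * (1 + k)) / (s * (2 + k))"
  have sk: "s * (2 * k + 3) > 1" using s k by (simp add: field_simps)
  have "\<alpha>0 < 1" using sk s k by (simp add: \<alpha>0_def field_simps)
  define \<alpha> where "\<alpha> = (max \<alpha>0 0 + 1) / 2"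
  have a: "0 < \<alpha>" "\<alpha> < 1" "\<alpha> > \<alpha>0" using \<open>\<alpha>0 < 1\<close> by (auto simp: \<alpha>_def)
  have as: "\<alpha> * s < 1" using a s by (metis less_trans mult_less_cancel_right1 mult.commute mult_strict_left_mono mult_1_right)
  have "\<alpha> * (s * (2 + k)) > 1 - s * (1 + k)" using a(3) s k by (simp add: \<alpha>0_def field_simps)
  hence key: "(1 + k) * (1 + \<alpha>) * s > 1 - \<alpha> * s" by (simp add: algebra_simps)
  have "(1 + k) * ((1 - \<alpha>^2) * s / (1 - \<alpha> * s)) = (1 - \<alpha>) * ((1 + k) * (1 + \<alpha>) * s / (1 - \<alpha> * s))"
    by (simp add: power2_eq_square algebra_simps)
  also have "\<dots> > (1 - \<alpha>) * 1"
  proof (rule mult_strict_left_mono)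
    show "1 < (1 + k) * (1 + \<alpha>) * s / (1 - \<alpha> * s)" using key as by (simp add: field_simps)
  qed (use a in simp)
  finally have "(1 + k) * ((1 - \<alpha>^2) * s / (1 - \<alpha> * s)) > 1 - \<alpha>" by simp
  thus ?thesis using a by (intro that[of \<alpha>]) auto
qed

lemma part2:
  fixes \<gamma> k \<rho> :: real
  assumes g: "0 \<le> \<gamma>" "\<gamma> < 1" and k: "0 \<le> k" "k < 1" and \<rho>: "\<rho> > 1 / (2 * k + 3)"
  shows "\<exists>h g a b. harm_hyp \<gamma> k h g a b \<and> \<not> bohr_ineq \<gamma> a b \<rho>"
proof -
  define s where "s = min \<rho> (1/2)"
  have "1 / (2 * k + 3) < 1/2" using k by (simp add: field_simps)
  hence s: "0 < s" "s < 1" "s > 1 / (2 * k + 3)" "s \<le> \<rho>"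
    using \<rho> k by (auto simp: s_def) (smt (verit) divide_pos_pos)
  obtain \<alpha> where a: "0 < \<alpha>" "\<alpha> < 1" and big: "\<alpha> + (1 + k) * ((1 - \<alpha>^2) * s / (1 - \<alpha> * s)) > 1"
    using choose_alpha[OF k(1) s(1-3)] by blast
  define d where "d = 1 - \<gamma>"
  have d0: "d > 0" using g by (simp add: d_def)
  define c where "c = omega_center \<gamma>"
  define \<Phi> where "\<Phi> z = of_real d * (z - c)" for z
  define h where "h z = (of_real \<alpha> - \<Phi> z) / (1 - of_real \<alpha> * \<Phi> z)" for z
  define gg where "gg z = of_real k * (h z - of_real \<alpha>)" for z
  define A where "A n = extA \<alpha> n * of_real d ^ n" for n
  define B where "B n = of_real k * extA \<alpha> n * of_real d ^ n" for n
  have Om: "Omega \<gamma> = ball c (1/d)" by (simp add: Omega_def d_def c_def)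
  have \<Phi>1: "norm (\<Phi> z) < 1" if "z \<in> Omega \<gamma>" for z
  proof -
    have "norm (z - c) < 1/d" using that by (simp add: Om dist_norm norm_minus_commute)
    hence "d * norm (z - c) < 1" using d0 by (simp add: field_simps)
    thus ?thesis using d0 by (simp add: \<Phi>_def norm_mult)
  qed
  have nz: "1 - of_real \<alpha> * \<Phi> z \<noteq> 0" if "z \<in> Omega \<gamma>" for z
  proof -
    have "\<alpha> * norm (\<Phi> z) \<le> 1 * norm (\<Phi> z)" using a by (intro mult_right_mono) auto
    hence "norm (of_real \<alpha> * \<Phi> z) < 1" using a \<Phi>1[OF that] by (simp add: norm_mult)
    thus ?thesis by (metis norm_one order.irrefl right_minus_eq)
  qed
  have opO: "open (Omega \<gamma>)" by (simp add: Om)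
  have holh: "h holomorphic_on Omega \<gamma>"
    unfolding h_def \<Phi>_def using nz unfolding \<Phi>_def by (auto intro!: holomorphic_intros)
  have holg: "gg holomorphic_on Omega \<gamma>"
    unfolding gg_def by (intro holomorphic_intros holh)
  have bdh: "norm (h z) \<le> 1" if "z \<in> Omega \<gamma>" for z
  proof -
    have "h z = - Moebius_function 0 (of_real \<alpha>) (\<Phi> z)"
      by (simp add: h_def Moebius_function_simple minus_divide_left)
    moreover have "norm (Moebius_function 0 (of_real \<alpha>) (\<Phi> z)) < 1"
      using a \<Phi>1[OF that] by (intro Moebius_function_norm_lt_1) auto
    ultimately show ?thesis by simp
  qed
  have sh: "(\<lambda>n. A n * (z - omega_center \<gamma>) ^ n) sums h z" if "z \<in> Omega \<gamma>" for z
  proof -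
    have "(\<lambda>n. extA \<alpha> n * (\<Phi> z)^n) sums h z"
      unfolding h_def by (rule extremal_fn(2)[OF a \<Phi>1[OF that]])
    thus ?thesis by (simp add: A_def \<Phi>_def c_def power_mult_distrib mult_ac)
  qed
  have sg: "(\<lambda>n. B (Suc n) * (z - omega_center \<gamma>) ^ Suc n) sums gg z" if "z \<in> Omega \<gamma>" for z
  proof -
    have "(\<lambda>n. extA \<alpha> (Suc n) * (\<Phi> z)^(Suc n)) sums (h z - of_real \<alpha>)"
      unfolding h_def by (rule extremal_fn(1)[OF a \<Phi>1[OF that]])
    hence "(\<lambda>n. of_real k * (extA \<alpha> (Suc n) * (\<Phi> z)^(Suc n))) sums (of_real k * (h z - of_real \<alpha>))"
      by (rule sums_mult)
    thus ?thesis by (simp add: B_def gg_def \<Phi>_def c_def power_mult_distrib mult_ac)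
  qed
  have dg: "norm (deriv gg z) \<le> k * norm (deriv h z)" if "z \<in> Omega \<gamma>" for z
  proof -
    have "(h has_field_derivative deriv h z) (at z)" by (rule holomorphic_derivI[OF holh opO that])
    hence "(gg has_field_derivative of_real k * (deriv h z - 0)) (at z)"
      unfolding gg_def[abs_def] by (intro DERIV_cmult DERIV_diff DERIV_const)
    hence "deriv gg z = of_real k * deriv h z" by (simp add: DERIV_imp_deriv)
    thus ?thesis using k by (simp add: norm_mult)
  qed
  have hyp: "harm_hyp \<gamma> k h gg A B"
    unfolding harm_hyp_def using holh holg bdh sh sg dg by blast
  have nA: "norm (A n) / (1 - \<gamma>)^n = norm (extA \<alpha> n)" for n
    using d0 by (simp add: A_def norm_mult norm_power d_def[symmetric])
  have nB: "norm (B n) / (1 - \<gamma>)^n = k * norm (extA \<alpha> n)" for n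
    using d0 k by (simp add: B_def norm_mult norm_power d_def[symmetric])
  have notb: "\<not> bohr_ineq \<gamma> A B \<rho>"
  proof
    assume "bohr_ineq \<gamma> A B \<rho>"
    hence S1: "summable (\<lambda>n. norm (extA \<alpha> n) * \<rho>^n)"
      and S2: "summable (\<lambda>n. k * norm (extA \<alpha> (Suc n)) * \<rho>^(Suc n))"
      and le: "(\<Sum>n. norm (extA \<alpha> n) * \<rho>^n) + (\<Sum>n. k * norm (extA \<alpha> (Suc n)) * \<rho>^(Suc n)) \<le> 1"
      unfolding bohr_ineq_def nA nB by auto
    have T1: "(\<lambda>n. norm (extA \<alpha> n) * s^n) sums (\<alpha> + (1 - \<alpha>^2) * s / (1 - \<alpha> * s))"
      using extremal_sums(2)[OF a _ s(2)] s by simp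
    have T2: "(\<lambda>n. k * (norm (extA \<alpha> (Suc n)) * s^(Suc n))) sums (k * ((1 - \<alpha>^2) * s / (1 - \<alpha> * s)))"
      using extremal_sums(1)[OF a _ s(2)] s by (intro sums_mult) simp
    have "\<alpha> + (1 - \<alpha>^2) * s / (1 - \<alpha> * s) \<le> (\<Sum>n. norm (extA \<alpha> n) * \<rho>^n)"
      unfolding sums_unique[OF T1]
      by (rule suminf_le[OF _ sums_summable[OF T1] S1]) (use s in \<open>auto intro!: mult_left_mono power_mono\<close>)
    moreover have "k * ((1 - \<alpha>^2) * s / (1 - \<alpha> * s)) \<le> (\<Sum>n. k * norm (extA \<alpha> (Suc n)) * \<rho>^(Suc n))"
      unfolding sums_unique[OF T2]
      by (rule suminf_le[OF _ sums_summable[OF T2] S2])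
         (use s k in \<open>auto simp: mult.assoc intro!: mult_left_mono power_mono simp del: power_Suc\<close>)
    moreover have "(1 + k) * ((1 - \<alpha>^2) * s / (1 - \<alpha> * s)) = (1 - \<alpha>^2) * s / (1 - \<alpha> * s) + k * ((1 - \<alpha>^2) * s / (1 - \<alpha> * s))"
      by (simp only: distrib_right mult_1_left)
    ultimately have "\<alpha> + (1 + k) * ((1 - \<alpha>^2) * s / (1 - \<alpha> * s)) \<le> 1"
      using le by linarith
    thus False using big by simp
  qed
  show ?thesis using hyp notb by blast
qed


theorem theorem2p2:
  fixes \<gamma> k :: real
  assumes "0 \<le> \<gamma>" "\<gamma> < 1" "0 \<le> k" "k < 1"
  shows "(\<forall>h g a b \<rho>. harm_hyp \<gamma> k h g a b \<longrightarrow> 0 \<le> \<rho> \<longrightarrow> \<rho> \<le> 1 / (2 * k + 3)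
            \<longrightarrow> bohr_ineq \<gamma> a b \<rho>)
       \<and> (\<forall>\<rho>. \<rho> > 1 / (2 * k + 3) \<longrightarrow>
            (\<exists>h g a b. harm_hyp \<gamma> k h g a b \<and> \<not> bohr_ineq \<gamma> a b \<rho>))"
  using part1[OF assms] part2[OF assms] by blast

end
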